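(* Let $H_1,H_2$ be Hermitian matrices and $f_1,f_2:[0,T]\to\mathbb{R}$ continuously differentiable, and let $U(t,s)$ be the propagator of $H(t)=f_1(t)H_1+f_2(t)H_2$. For $0<h\le T$ let $$U_{g,2}(h,0)=\exp\Big(-\mathrm{i}\int_{h/2}^{h}f_1(s)ds\,H_1\Big)\exp\Big(-\mathrm{i}\int_0^{h}f_2(s)ds\,H_2\Big)\exp\Big(-\mathrm{i}\int_0^{h/2}f_1(s)ds\,H_1\Big).$$ Then $$U_{g,2}(h,0)-U(h,0)=\int_0^h U(h,s)\exp\Big(-\mathrm{i}\int_{s/2}^s f_1(s')ds'H_1\Big)E_{g,2}(s)\exp\Big(-\mathrm{i}\int_0^s f_2(s')ds'H_2\Big)\exp\Big(-\mathrm{i}\int_0^{s/2}f_1(s')ds'H_1\Big)ds,$$ where $$\begin{aligned}E_{g,2}(h)&=-\frac{h}{2}f_1(0)\int_0^h f_2'(s)ds\,[H_1,H_2]+\frac{h}{4}f_2(0)\int_0^h f_1'(s/2)ds\,[H_1,H_2]\\&\quad-f_2(h)\int_0^h\Big(f_1'(s)-\tfrac14 f_1'(s/2)\Big)\Big(\exp\big(\operatorname{ad}_{\mathrm{i}\int_{s/2}^s f_1(s')ds'H_1}\big)[H_1,H_2]\Big)(h-s)ds\\&\quad+\frac12 f_1(h/2)\int_0^h f_2'(s)\Big(\exp\big(\operatorname{ad}_{-\mathrm{i}\int_0^s f_2(s')ds'H_2}\big)[H_1,H_2]\Big)(h-s)ds\\&\quad-\mathrm{i} f_2(h)\int_0^h\Big(f_1(s)-\tfrac12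 f_1(s/2)\Big)^2\Big(\exp\big(\operatorname{ad}_{\mathrm{i}\int_{s/2}^s f_1(s')ds'H_1}\big)[H_1,[H_1,H_2]]\Big)(h-s)ds\\&\quad+\frac{\mathrm{i}}{2}f_1(h/2)\int_0^h f_2^2(s)\Big(\exp\big(\operatorname{ad}_{-\mathrm{i}\int_0^s f_2(s')ds'H_2}\big)[H_2,[H_2,H_1]]\Big)(h-s)ds.\end{aligned}$$
   Context: $U(t,s)$ denotes the exact evolution operator: $\partial_t U(t,s)=-\mathrm{i} H(t)U(t,s)$, $U(s,s)=I$. For matrices $A,B$, $\operatorname{ad}_A(B)=[A,B]=AB-BA$ and $\exp(\operatorname{ad}_A)B=\exp(A)B\exp(-A)$. *)

theory Defs
  imports "HOL-Analysis.Analysis"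
begin

text \<open>Note that the ring operations * and ^ on vec are componentwise, so
matrix powers and the matrix exponential are defined explicitly.\<close>

fun matpow :: "complex^'n^'n \<Rightarrow> nat \<Rightarrow> complex^'n^'n" where
  "matpow A 0 = mat 1"
| "matpow A (Suc k) = A ** matpow A k"

definition mexp :: "complex^'n^'n \<Rightarrow> complex^'n^'n" where
  "mexp A = (\<Sum>k. (1 / fact k) *\<^sub>R matpow A k)"

definition csmult :: "complex \<Rightarrow> complex^'n^'n \<Rightarrow> complex^'n^'n" (infixr "*\<^sub>M" 75) where
  "c *\<^sub>M A = (\<chi> i j. c * A $ i $ j)"

definition hermitian :: "complex^'n^'n \<Rightarrow> bool" where
  "hermitian A \<longleftrightarrow> (\<forall>i j. A $ i $ j = cnj (A $ j $ i))"

definition commutator :: "complex^'n^'n \<Rightarrow> complex^'n^'n \<Rightarrow> complex^'n^'n" where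
  "commutator A B = A ** B - B ** A"

text \<open>exp(ad_A) B = exp(A) B exp(-A)\<close>
definition exp_ad :: "complex^'n^'n \<Rightarrow> complex^'n^'n \<Rightarrow> complex^'n^'n" where
  "exp_ad A B = mexp A ** B ** mexp (- A)"

text \<open>The error term E_{g,2}(h); f1', f2' are the derivatives of f1, f2.\<close>
definition Eg2 ::
  "complex^'n^'n \<Rightarrow> complex^'n^'n \<Rightarrow> (real \<Rightarrow> real) \<Rightarrow> (real \<Rightarrow> real) \<Rightarrow>
   (real \<Rightarrow> real) \<Rightarrow> (real \<Rightarrow> real) \<Rightarrow> real \<Rightarrow> complex^'n^'n" where
  "Eg2 H1 H2 f1 f2 f1' f2' h =
     complex_of_real (- (h/2) * f1 0 * integral {0..h} f2') *\<^sub>M commutator H1 H2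
   + complex_of_real ((h/4) * f2 0 * integral {0..h} (\<lambda>s. f1' (s/2))) *\<^sub>M commutator H1 H2
   - complex_of_real (f2 h) *\<^sub>M integral {0..h} (\<lambda>s.
        complex_of_real ((f1' s - f1' (s/2) / 4) * (h - s)) *\<^sub>M
        exp_ad ((\<i> * complex_of_real (integral {s/2..s} f1)) *\<^sub>M H1) (commutator H1 H2))
   + complex_of_real (f1 (h/2) / 2) *\<^sub>M integral {0..h} (\<lambda>s.
        complex_of_real (f2' s * (h - s)) *\<^sub>M
        exp_ad ((- \<i> * complex_of_real (integral {0..s} f2)) *\<^sub>M H2) (commutator H1 H2))
   - (\<i> * complex_of_real (f2 h)) *\<^sub>M integral {0..h} (\<lambda>s.
        complex_of_real ((f1 s - f1 (s/2) / 2)^2 * (h - s)) *\<^sub>M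
        exp_ad ((\<i> * complex_of_real (integral {s/2..s} f1)) *\<^sub>M H1)
          (commutator H1 (commutator H1 H2)))
   + (\<i> / 2 * complex_of_real (f1 (h/2))) *\<^sub>M integral {0..h} (\<lambda>s.
        complex_of_real ((f2 s)^2 * (h - s)) *\<^sub>M
        exp_ad ((- \<i> * complex_of_real (integral {0..s} f2)) *\<^sub>M H2)
          (commutator H2 (commutator H2 H1)))"

definition Ug2 ::
  "complex^'n^'n \<Rightarrow> complex^'n^'n \<Rightarrow> (real \<Rightarrow> real) \<Rightarrow> (real \<Rightarrow> real) \<Rightarrow> real \<Rightarrow> complex^'n^'n" where
  "Ug2 H1 H2 f1 f2 h =
     mexp ((- \<i> * complex_of_real (integral {h/2..h} f1)) *\<^sub>M H1)
  ** mexp ((- \<i> * complex_of_real (integral {0..h} f2)) *\<^sub>M H2)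
  ** mexp ((- \<i> * complex_of_real (integral {0..h/2} f1)) *\<^sub>M H1)"

end

theory Submission
  imports Defs
begin

typedef (overloaded) ('n::finite) cm = "UNIV :: (complex^'n^'n) set" morphisms rep CM by auto
setup_lifting type_definition_cm

lemma cm_eqI: "rep A = rep B \<Longrightarrow> A = B" by (simp add: rep_inject)

lemma matrix_add_rdistrib': "((B + C) ** A) = (B ** A) + (C ** A)" for A B C :: "'a::semiring_1^'n^'n"
  by (vector matrix_matrix_mult_def sum.distrib[symmetric] field_simps)

instantiation cm :: (finite) ring_1
begin
lift_definition zero_cm :: "'a cm" is 0 .
lift_definition one_cm :: "'a cm" is "mat 1" .
lift_definition plus_cm :: "'a cm \<Rightarrow> 'a cm \<Rightarrow> 'a cm" is "(+)" .
lift_definition minus_cm :: "'a cm \<Rightarrow> 'a cm \<Rightarrow> 'a cm" is "(-)" .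
lift_definition uminus_cm :: "'a cm \<Rightarrow> 'a cm" is "uminus" .
lift_definition times_cm :: "'a cm \<Rightarrow> 'a cm \<Rightarrow> 'a cm" is "(**)" .
instance
proof
  fix a b c :: "'a cm"
  show "a * b * c = a * (b * c)" by transfer (simp add: matrix_mul_assoc)
  show "(a + b) * c = a * c + b * c" by transfer (simp add: matrix_add_rdistrib')
  show "a * (b + c) = a * b + a * c" by transfer (simp add: matrix_add_ldistrib)
  show "1 * a = a" by transfer simp
  show "a * 1 = a" by transfer simp
  show "a + b + c = a + (b + c)" by transfer (simp add: algebra_simps)
  show "a + b = b + a" by transfer (simp add: algebra_simps)
  show "0 + a = a" by transfer simp
  show "- a + a = 0" by transfer simp
  show "a - b = a + - b" by transfer simp
  show "(0::'a cm) \<noteq> 1"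
  proof
    assume "(0::'a cm) = 1"
    then have "rep (0::'a cm) = rep 1" by simp
    then show False by (simp add: zero_cm.rep_eq one_cm.rep_eq vec_eq_iff mat_def) (metis one_neq_zero)
  qed
qed
end


definition rs :: "complex^'n^'n \<Rightarrow> 'n \<Rightarrow> real" where
  "rs A i = (\<Sum>j\<in>UNIV. cmod (A $ i $ j))"
definition mnorm :: "complex^'n^'n \<Rightarrow> real" where
  "mnorm A = Max (range (rs A))"

lemma rs_nonneg: "0 \<le> rs A i" unfolding rs_def by (simp add: sum_nonneg)
lemma rs_le_mnorm: "rs A i \<le> mnorm A" unfolding mnorm_def by (rule Max_ge) auto
lemma mnorm_le: "(\<And>i. rs A i \<le> b) \<Longrightarrow> mnorm A \<le> b" unfolding mnorm_def
  by (subst Max_le_iff) auto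
lemma mnorm_nonneg: "0 \<le> mnorm A" using rs_nonneg rs_le_mnorm order_trans by blast
lemma entry_le_rs: "cmod (A $ i $ j) \<le> rs A i" unfolding rs_def
  by (rule member_le_sum) auto
lemma entry_le_mnorm: "cmod (A $ i $ j) \<le> mnorm A" using entry_le_rs rs_le_mnorm order_trans by blast
lemma mnorm_eq_0: "mnorm A = 0 \<longleftrightarrow> A = 0"
proof
  assume "mnorm A = 0"
  then have "cmod (A $ i $ j) = 0" for i j using entry_le_mnorm[of A i j] by (simp add: antisym)
  then show "A = 0" by (simp add: vec_eq_iff)
next
  assume "A = 0" then show "mnorm A = 0" by (intro antisym mnorm_le mnorm_nonneg) (simp add: rs_def)
qed
lemma mnorm_triangle: "mnorm (A + B) \<le> mnorm A + mnorm B"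
proof (rule mnorm_le)
  fix i
  have "rs (A + B) i \<le> rs A i + rs B i" unfolding rs_def
    by (simp add: sum.distrib[symmetric] sum_mono norm_triangle_ineq)
  also have "\<dots> \<le> mnorm A + mnorm B" by (intro add_mono rs_le_mnorm)
  finally show "rs (A + B) i \<le> mnorm A + mnorm B" .
qed
lemma rs_scale: "rs (r *\<^sub>R A) i = \<bar>r\<bar> * rs A i" unfolding rs_def
  by (simp add: sum_distrib_left)
lemma mnorm_scale: "mnorm (r *\<^sub>R A) = \<bar>r\<bar> * mnorm A"
proof (rule antisym)
  show "mnorm (r *\<^sub>R A) \<le> \<bar>r\<bar> * mnorm A"
    by (rule mnorm_le) (simp add: rs_scale mult_left_mono rs_le_mnorm)
  show "\<bar>r\<bar> * mnorm A \<le> mnorm (r *\<^sub>R A)"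
  proof (cases "r = 0")
    case True then show ?thesis by (simp add: mnorm_nonneg)
  next
    case False
    have "mnorm A \<le> mnorm (r *\<^sub>R A) / \<bar>r\<bar>"
      by (rule mnorm_le) (use False in \<open>simp add: le_divide_eq rs_scale mult.commute[of _ "\<bar>r\<bar>"] rs_le_mnorm[of "r *\<^sub>R A", unfolded rs_scale]\<close>)
    then show ?thesis using False by (simp add: le_divide_eq mult.commute)
  qed
qed
lemma mnorm_mult: "mnorm (A ** B) \<le> mnorm A * mnorm B"
proof (rule mnorm_le)
  fix i
  have "rs (A ** B) i = (\<Sum>j\<in>UNIV. cmod (\<Sum>k\<in>UNIV. A $ i $ k * B $ k $ j))"
    by (simp add: rs_def matrix_matrix_mult_def)
  also have "\<dots> \<le> (\<Sum>j\<in>UNIV. \<Sum>k\<in>UNIV. cmod (A $ i $ k) * cmod (B $ k $ j))"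
    by (intro sum_mono) (metis (no_types, lifting) norm_mult norm_sum sum.cong)
  also have "\<dots> = (\<Sum>k\<in>UNIV. cmod (A $ i $ k) * rs B k)"
    by (subst sum.swap) (simp add: rs_def sum_distrib_left)
  also have "\<dots> \<le> (\<Sum>k\<in>UNIV. cmod (A $ i $ k) * mnorm B)"
    by (intro sum_mono mult_left_mono rs_le_mnorm) auto
  also have "\<dots> = rs A i * mnorm B" by (simp add: rs_def sum_distrib_right)
  also have "\<dots> \<le> mnorm A * mnorm B" by (intro mult_right_mono rs_le_mnorm mnorm_nonneg)
  finally show "rs (A ** B) i \<le> mnorm A * mnorm B" .
qed
lemma mnorm_one: "mnorm (mat 1 :: complex^'n^'n) = 1"
proof -
  have r: "rs (mat 1 :: complex^'n^'n) i = 1" for i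
    by (simp add: rs_def mat_def if_distrib[of cmod] sum.delta cong: if_cong)
  show ?thesis by (metis (no_types) antisym mnorm_le r order_refl rs_le_mnorm)
qed

instantiation cm :: (finite) real_normed_vector
begin
lift_definition scaleR_cm :: "real \<Rightarrow> 'a cm \<Rightarrow> 'a cm" is "scaleR" .
lift_definition norm_cm :: "'a cm \<Rightarrow> real" is mnorm .
definition dist_cm :: "'a cm \<Rightarrow> 'a cm \<Rightarrow> real" where "dist_cm a b = norm (a - b)"
definition sgn_cm :: "'a cm \<Rightarrow> 'a cm" where "sgn_cm x = scaleR (inverse (norm x)) x"
definition uniformity_cm :: "('a cm \<times> 'a cm) filter" where
  "uniformity_cm = (INF e\<in>{0 <..}. principal {(x, y). dist x y < e})"
definition open_cm :: "'a cm set \<Rightarrow> bool" where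
  "open_cm S = (\<forall>x\<in>S. \<forall>\<^sub>F (x', y) in uniformity. x' = x \<longrightarrow> y \<in> S)"
instance
proof
  fix a b :: real and x y :: "'a cm"
  show "a *\<^sub>R (x + y) = a *\<^sub>R x + a *\<^sub>R y" by transfer (simp add: algebra_simps)
  show "(a + b) *\<^sub>R x = a *\<^sub>R x + b *\<^sub>R x" by transfer (simp add: algebra_simps)
  show "a *\<^sub>R b *\<^sub>R x = (a * b) *\<^sub>R x" by transfer simp
  show "1 *\<^sub>R x = x" by transfer simp
  show "norm x = 0 \<longleftrightarrow> x = 0" by transfer (rule mnorm_eq_0)
  show "norm (x + y) \<le> norm x + norm y" by transfer (rule mnorm_triangle)
  show "norm (a *\<^sub>R x) = \<bar>a\<bar> * norm x" by transfer (rule mnorm_scale)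
qed (simp_all add: dist_cm_def sgn_cm_def uniformity_cm_def open_cm_def)
end

lemma mult_scale_l: "(r *\<^sub>R A) ** B = r *\<^sub>R (A ** B)" for A B :: "complex^'n^'n"
  by (simp add: matrix_matrix_mult_def vec_eq_iff scaleR_sum_right)
lemma mult_scale_r: "A ** (r *\<^sub>R B) = r *\<^sub>R (A ** B)" for A B :: "complex^'n^'n"
  by (simp add: matrix_matrix_mult_def vec_eq_iff scaleR_sum_right)

instance cm :: (finite) real_normed_algebra_1
proof
  fix a :: real and x y :: "'a cm"
  show "a *\<^sub>R x * y = a *\<^sub>R (x * y)" by transfer (rule mult_scale_l)
  show "x * a *\<^sub>R y = a *\<^sub>R (x * y)" by transfer (rule mult_scale_r)
  show "norm (x * y) \<le> norm x * norm y" by transfer (rule mnorm_mult)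
  show "norm (1::'a cm) = 1" by transfer (rule mnorm_one)
qed


lemma vnorm_le_sum: "norm (x::'a::real_normed_vector^'n) \<le> (\<Sum>i\<in>UNIV. norm (x $ i))"
  unfolding norm_vec_def by (rule L2_set_le_sum) auto

lemma rep_bound: "norm (rep A) \<le> norm A * real CARD('n)" for A :: "'n::finite cm"
proof -
  have "norm (rep A) \<le> (\<Sum>i\<in>UNIV. norm (rep A $ i))" by (rule vnorm_le_sum)
  also have "\<dots> \<le> (\<Sum>i\<in>UNIV. rs (rep A) i)"
    by (intro sum_mono) (simp add: rs_def vnorm_le_sum)
  also have "\<dots> \<le> (\<Sum>i\<in>(UNIV::'n set). norm A)"
    by (rule sum_mono) (simp add: norm_cm.rep_eq rs_le_mnorm)
  finally show ?thesis by (simp add: mult.commute)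
qed

lemma CM_bound: "norm (CM A) \<le> norm A * real CARD('n)" for A :: "complex^'n::finite^'n"
proof -
  have "mnorm A \<le> norm A * real CARD('n)"
  proof (rule mnorm_le)
    fix i
    have norm_conv: "cmod (A $ i $ j) \<le> norm A" for j
    proof -
      have "norm (A $ i $ j) \<le> norm (A $ i)" by (rule Finite_Cartesian_Product.norm_nth_le)
      moreover have "norm (A $ i) \<le> norm A" by (rule Finite_Cartesian_Product.norm_nth_le)
      ultimately show ?thesis by simp
    qed
    have "rs A i \<le> (\<Sum>j\<in>(UNIV::'n set). norm A)" unfolding rs_def
      by (rule sum_mono) (rule norm_conv)
    then show "rs A i \<le> norm A * real CARD('n)" by (simp add: mult.commute)
  qed
  then show ?thesis by (simp add: norm_cm.rep_eq CM_inverse)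
qed
lemma bounded_linear_rep: "bounded_linear (rep :: 'n::finite cm \<Rightarrow> _)"
  by (rule bounded_linear_intro[where K="real CARD('n)"])
     (simp_all add: plus_cm.rep_eq scaleR_cm.rep_eq rep_bound)

lemma bounded_linear_CM: "bounded_linear (CM :: _ \<Rightarrow> 'n::finite cm)"
  by (rule bounded_linear_intro[where K="real CARD('n)"])
     (auto intro!: cm_eqI simp: plus_cm.rep_eq scaleR_cm.rep_eq CM_inverse CM_bound)

instance cm :: (finite) banach
proof
  fix X :: "nat \<Rightarrow> 'a cm"
  assume "Cauchy X"
  then have "Cauchy (\<lambda>n. rep (X n))" by (rule bounded_linear.Cauchy[OF bounded_linear_rep])
  then obtain L where "(\<lambda>n. rep (X n)) \<longlonglongrightarrow> L" using Cauchy_convergent_iff convergent_def by blast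
  then have "(\<lambda>n. CM (rep (X n))) \<longlonglongrightarrow> CM L" by (rule bounded_linear.tendsto[OF bounded_linear_CM])
  then show "convergent X" unfolding convergent_def rep_inverse by blast
qed

lemma rep_mult: "rep (A * B) = rep A ** rep B" by (simp add: times_cm.rep_eq)
lemma rep_add: "rep (A + B) = rep A + rep B" by (simp add: plus_cm.rep_eq)
lemma rep_diff: "rep (A - B) = rep A - rep B" by (simp add: minus_cm.rep_eq)
lemma rep_uminus: "rep (- A) = - rep A" by (simp add: uminus_cm.rep_eq)
lemma rep_scaleR: "rep (r *\<^sub>R A) = r *\<^sub>R rep A" by (simp add: scaleR_cm.rep_eq)
lemma rep_one: "rep (1::'n::finite cm) = mat 1" by (simp add: one_cm.rep_eq)
lemma rep_zero: "rep (0::'n::finite cm) = 0" by (simp add: zero_cm.rep_eq)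
lemmas rep_simps = rep_mult rep_add rep_diff rep_uminus rep_scaleR rep_one rep_zero CM_inverse[simplified]

lemma rep_power: "rep (A ^ k) = matpow (rep A) k"
  by (induction k) (simp_all add: rep_simps)

lemma mexp_rep: "mexp (rep A) = rep (exp A)"
proof -
  have "rep (exp A) = rep (\<Sum>n. A ^ n /\<^sub>R fact n)" by (simp add: exp_def)
  also have "\<dots> = (\<Sum>n. rep (A ^ n /\<^sub>R fact n))"
    by (rule bounded_linear.suminf[OF bounded_linear_rep summable_exp_generic])
  also have "\<dots> = mexp (rep A)"
    by (simp add: mexp_def rep_power rep_scaleR divide_inverse_commute)
  finally show ?thesis by simp
qed

lemma mexp_CM: "mexp A = rep (exp (CM A))"
  using mexp_rep[of "CM A"] by (simp add: CM_inverse)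

lift_definition cs :: "complex \<Rightarrow> 'n::finite cm \<Rightarrow> 'n cm" is csmult .

lemma rep_cs: "rep (cs c A) = c *\<^sub>M rep A" by (simp add: cs.rep_eq)

lemma cs_mult_left: "cs c A * B = cs c (A * B)"
  by transfer (simp add: csmult_def matrix_matrix_mult_def vec_eq_iff sum_distrib_left mult.assoc)
lemma csmult_mult_right: "A ** (c *\<^sub>M B) = c *\<^sub>M (A ** B)" for A B :: "complex^'n^'n"
  apply (simp add: csmult_def matrix_matrix_mult_def vec_eq_iff sum_distrib_left)
  apply (intro allI sum.cong refl) by (simp add: ac_simps)
lemma cs_mult_right: "A * cs c B = cs c (A * B)"
  by (rule cm_eqI) (simp add: rep_mult rep_cs csmult_mult_right)
lemma cs_add: "cs c (A + B) = cs c A + cs c B"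
  by transfer (simp add: csmult_def vec_eq_iff algebra_simps)
lemma cs_diff: "cs c (A - B) = cs c A - cs c B"
  by transfer (simp add: csmult_def vec_eq_iff algebra_simps)
lemma cs_uminus: "cs c (- A) = - cs c A"
  by transfer (simp add: csmult_def vec_eq_iff algebra_simps)
lemma cs_cs: "cs c (cs d A) = cs (c * d) A"
  by transfer (simp add: csmult_def vec_eq_iff algebra_simps)
lemma cs_of_real: "cs (of_real r) A = r *\<^sub>R A"
  by transfer (simp add: csmult_def vec_eq_iff scaleR_conv_of_real[where 'a=complex])
lemma cs_scaleR: "cs c (r *\<^sub>R A) = r *\<^sub>R cs c A"
  by transfer (simp add: csmult_def vec_eq_iff scaleR_conv_of_real[where 'a=complex] algebra_simps)
lemma cs_1: "cs 1 A = A"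
  by transfer (simp add: csmult_def vec_eq_iff)
lemma cs_0: "cs c 0 = 0"
  by transfer (simp add: csmult_def vec_eq_iff)
lemma cs_add_scalar: "cs (c + d) A = cs c A + cs d A"
  by transfer (simp add: csmult_def vec_eq_iff algebra_simps)
lemma cs_neg_scalar: "cs (- c) A = - cs c A"
  by transfer (simp add: csmult_def vec_eq_iff algebra_simps)
lemma bounded_linear_cs: "bounded_linear (cs c :: 'n::finite cm \<Rightarrow> _)"
proof -
  have "cs c = (\<lambda>A. cs c 1 * A)" by (simp add: cs_mult_left)
  then show ?thesis using bounded_linear_mult_right by metis
qed

lemma csmult_real: "complex_of_real r *\<^sub>M A = r *\<^sub>R A"
  by (simp add: csmult_def vec_eq_iff scaleR_conv_of_real[where 'a=complex])
lemma csmult_mi: "(- \<i> * complex_of_real r) *\<^sub>M A = r *\<^sub>R ((- \<i>) *\<^sub>M A)"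
  by (simp add: csmult_def vec_eq_iff scaleR_conv_of_real[where 'a=complex])
lemma csmult_pi: "(\<i> * complex_of_real r) *\<^sub>M A = (- r) *\<^sub>R ((- \<i>) *\<^sub>M A)"
  by (simp add: csmult_def vec_eq_iff scaleR_conv_of_real[where 'a=complex])

lift_definition adj :: "'n::finite cm \<Rightarrow> 'n cm" is "\<lambda>A. \<chi> i j. cnj (A $ j $ i)" .

lemma adj_mult_vec: "(\<chi> i j. cnj ((A ** B) $ j $ i)) = (\<chi> i j. cnj (B $ j $ i)) ** (\<chi> i j. cnj (A $ j $ i))" for A B :: "complex^'n^'n"
  apply (simp add: matrix_matrix_mult_def vec_eq_iff)
  apply (intro allI sum.cong refl) by (simp add: ac_simps)
lemma adj_mult: "adj (A * B) = adj B * adj A"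
  by (rule cm_eqI) (simp add: rep_mult adj.rep_eq adj_mult_vec)
lemma adj_add: "adj (A + B) = adj A + adj B"
  by transfer (simp add: vec_eq_iff)
lemma adj_diff: "adj (A - B) = adj A - adj B"
  by transfer (simp add: vec_eq_iff)
lemma adj_scaleR: "adj (r *\<^sub>R A) = r *\<^sub>R adj A"
  by transfer (simp add: vec_eq_iff)
lemma adj_cs: "adj (cs c A) = cs (cnj c) (adj A)"
  by transfer (simp add: vec_eq_iff csmult_def)
lemma adj_one: "adj 1 = 1"
  by transfer (simp add: vec_eq_iff mat_def)
lemma adj_zero: "adj 0 = 0"
  by transfer (simp add: vec_eq_iff)
lemma adj_herm:
  assumes "hermitian H" shows "adj (CM H) = CM H"
proof -
  have h: "cnj (H $ j $ i) = H $ i $ j" for i j using assms unfolding hermitian_def by (metis complex_cnj_cnj)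
  show ?thesis by (rule cm_eqI) (simp add: adj.rep_eq CM_inverse vec_eq_iff h)
qed
lemma bounded_linear_adj: "bounded_linear (adj :: 'n::finite cm \<Rightarrow> _)"
proof (rule bounded_linear_intro[where K="real CARD('n)"])
  fix x :: "'n cm"
  have "mnorm (rep (adj x)) \<le> norm x * real CARD('n)"
  proof (rule mnorm_le)
    fix i
    have "rs (rep (adj x)) i \<le> (\<Sum>j\<in>(UNIV::'n set). norm x)" unfolding rs_def
      by (rule sum_mono) (simp add: adj.rep_eq norm_cm.rep_eq entry_le_mnorm)
    then show "rs (rep (adj x)) i \<le> norm x * real CARD('n)" by (simp add: mult.commute)
  qed
  then show "norm (adj x) \<le> norm x * real CARD('n)" by (simp add: norm_cm.rep_eq)
qed (simp_all add: adj_add adj_scaleR)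

lemma exp_sR_inv1: "exp (x *\<^sub>R K) * exp ((- x) *\<^sub>R K) = (1::'a::{real_normed_algebra_1,banach})"
  using exp_minus_inverse[of "x *\<^sub>R K"] by simp
lemma exp_sR_inv2: "exp ((- x) *\<^sub>R K) * exp (x *\<^sub>R K) = (1::'a::{real_normed_algebra_1,banach})"
  using exp_minus_inverse[of "(- x) *\<^sub>R K"] by simp
lemma exp_sR_comm: "K * exp (x *\<^sub>R K) = exp (x *\<^sub>R K) * (K::'a::{real_normed_algebra_1,banach})"
  by (simp add: exp_times_scaleR_commute)

lemma exp_sR_deriv:
  fixes K :: "'a::{real_normed_algebra_1,banach}"
  assumes "(\<phi> has_real_derivative d) (at u within S)"
  shows "((\<lambda>u. exp (\<phi> u *\<^sub>R K)) has_vector_derivative (d *\<^sub>R (K * exp (\<phi> u *\<^sub>R K)))) (at u within S)"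
proof -
  have "((\<lambda>t. exp (t *\<^sub>R K)) \<circ> \<phi> has_vector_derivative (d *\<^sub>R (exp (\<phi> u *\<^sub>R K) * K))) (at u within S)"
    by (rule vector_diff_chain_within[OF assms[unfolded has_real_derivative_iff_has_vector_derivative]
          exp_scaleR_has_vector_derivative_right])
  then show ?thesis by (simp add: o_def exp_sR_comm)
qed

definition Ad :: "real \<Rightarrow> 'a::{real_normed_algebra_1,banach} \<Rightarrow> 'a \<Rightarrow> 'a" where
  "Ad \<phi> K N = exp (\<phi> *\<^sub>R K) * N * exp ((- \<phi>) *\<^sub>R K)"

lemma Ad_0: "Ad 0 K N = N" by (simp add: Ad_def)
lemma Ad_add: "Ad \<phi> K (N1 + N2) = Ad \<phi> K N1 + Ad \<phi> K N2" by (simp add: Ad_def algebra_simps)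
lemma Ad_minus: "Ad \<phi> K (- N) = - Ad \<phi> K N" by (simp add: Ad_def algebra_simps)
lemma Ad_scaleR: "Ad \<phi> K (r *\<^sub>R N) = r *\<^sub>R Ad \<phi> K N" by (simp add: Ad_def algebra_simps)
lemma Ad_cs: "Ad \<phi> K (cs c N) = cs c (Ad \<phi> K N)" by (simp add: Ad_def cs_mult_left cs_mult_right)

lemma Ad_deriv:
  fixes K :: "'a::{real_normed_algebra_1,banach}"
  assumes "(\<phi> has_real_derivative d) (at u within S)"
  shows "((\<lambda>u. Ad (\<phi> u) K N) has_vector_derivative (d *\<^sub>R Ad (\<phi> u) K (K * N - N * K))) (at u within S)"
proof -
  have m: "((\<lambda>u. - \<phi> u) has_real_derivative - d) (at u within S)"
    using assms by (rule derivative_intros)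
  let ?e = "exp (\<phi> u *\<^sub>R K)" and ?f = "exp ((- \<phi> u) *\<^sub>R K)"
  have "((\<lambda>u. exp (\<phi> u *\<^sub>R K) * N * exp ((- \<phi> u) *\<^sub>R K)) has_vector_derivative
      (?e * N * ((- d) *\<^sub>R (K * ?f)) + (d *\<^sub>R (K * ?e) * N) * ?f)) (at u within S)"
    by (intro has_vector_derivative_mult has_vector_derivative_mult_left exp_sR_deriv assms m)
  also have "?e * N * ((- d) *\<^sub>R (K * ?f)) + (d *\<^sub>R (K * ?e) * N) * ?f = d *\<^sub>R Ad (\<phi> u) K (K * N - N * K)"
    by (simp add: Ad_def algebra_simps exp_sR_comm)
  finally show ?thesis unfolding Ad_def .
qed

lemma exp_sR_cont:
  fixes K :: "'a::{real_normed_algebra_1,banach}"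
  assumes "continuous_on S \<phi>"
  shows "continuous_on S (\<lambda>u. exp (\<phi> u *\<^sub>R K))"
proof -
  have "continuous_on UNIV (\<lambda>t. exp (t *\<^sub>R K))"
    by (rule continuous_on_vector_derivative) (rule exp_scaleR_has_vector_derivative_right)
  then show ?thesis by (rule continuous_on_compose2[OF _ assms]) auto
qed

lemma Ad_cont:
  fixes K :: "'a::{real_normed_algebra_1,banach}"
  assumes "continuous_on S \<phi>"
  shows "continuous_on S (\<lambda>u. Ad (\<phi> u) K N)"
proof -
  have "continuous_on S (\<lambda>u. - \<phi> u)" using assms by (intro continuous_intros)
  then show ?thesis unfolding Ad_def by (intro continuous_intros exp_sR_cont assms)
qed

section \<open>Conservation\<close>

lemma cs_cancel: "cs (- \<i>) Z + cs \<i> Z = 0"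
  by (metis cs_add_scalar add.left_inverse cs_of_real of_real_0 scale_zero_left)

lemma conserve:
  fixes Y :: "real \<Rightarrow> 'n::finite cm"
  assumes Yd: "\<And>t. t \<in> {0..T} \<Longrightarrow> (Y has_vector_derivative cs (- \<i>) (Hf t * Y t)) (at t within {0..T})"
    and Hh: "\<And>t. t \<in> {0..T} \<Longrightarrow> adj (Hf t) = Hf t"
    and t: "t \<in> {0..T}" and s: "s \<in> {0..T}"
  shows "adj (Y t) * Y t = adj (Y s) * Y s"
proof -
  have dz: "((\<lambda>t. adj (Y t) * Y t) has_derivative (\<lambda>h. 0)) (at x within {0..T})" if x: "x \<in> {0..T}" for x
  proof -
    have "((\<lambda>t. adj (Y t) * Y t) has_vector_derivative
        (adj (Y x) * cs (- \<i>) (Hf x * Y x) + adj (cs (- \<i>) (Hf x * Y x)) * Y x)) (at x within {0..T})"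
      by (intro has_vector_derivative_mult bounded_linear.has_vector_derivative[OF bounded_linear_adj] Yd x)
    also have "adj (Y x) * cs (- \<i>) (Hf x * Y x) + adj (cs (- \<i>) (Hf x * Y x)) * Y x = 0"
      by (simp add: adj_cs adj_mult Hh[OF x] cs_mult_left cs_mult_right mult.assoc cs_cancel)
    finally show ?thesis by (simp add: has_vector_derivative_def)
  qed
  have "\<exists>c. \<forall>x\<in>{0..T}. adj (Y x) * Y x = c"
    by (rule has_derivative_zero_constant) (simp_all add: dz)
  then obtain c where "\<forall>x\<in>{0..T}. adj (Y x) * Y x = c" by blast
  with t s show ?thesis by simp
qed

lemma adj_Y_zero:
  fixes Y :: "'n::finite cm"
  assumes "adj Y * Y = 0" shows "Y = 0"
proof (rule cm_eqI)
  have "rep (adj Y * Y) $ j $ j = 0" for j using assms by (simp add: rep_zero)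
  then have "(\<Sum>i\<in>UNIV. cnj (rep Y $ i $ j) * rep Y $ i $ j) = 0" for j
    by (simp add: rep_mult adj.rep_eq matrix_matrix_mult_def)
  moreover have "cnj z * z = complex_of_real ((cmod z)\<^sup>2)" for z
    by (metis complex_norm_square mult.commute)
  ultimately have "(\<Sum>i\<in>UNIV. complex_of_real ((cmod (rep Y $ i $ j))\<^sup>2)) = 0" for j
    by (metis (no_types, lifting) sum.cong)
  then have "(\<Sum>i\<in>UNIV. (cmod (rep Y $ i $ j))\<^sup>2) = 0" for j
    by (metis of_real_eq_0_iff of_real_sum)
  then have "\<forall>i\<in>UNIV. (cmod (rep Y $ i $ j))\<^sup>2 = 0" for j
    by (subst sum_nonneg_eq_0_iff[symmetric]) auto
  then show "rep Y = rep 0" by (simp add: rep_zero vec_eq_iff)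
qed

locale setting =
  fixes H1 H2 :: "complex^'n::finite^'n"
    and f1 f2 f1' f2' :: "real \<Rightarrow> real"
    and T :: real
    and U :: "real \<Rightarrow> real \<Rightarrow> complex^'n^'n"
  assumes herm1: "hermitian H1" and herm2: "hermitian H2"
    and df1: "\<And>t. t \<in> {0..T} \<Longrightarrow> (f1 has_real_derivative f1' t) (at t within {0..T})"
    and df2: "\<And>t. t \<in> {0..T} \<Longrightarrow> (f2 has_real_derivative f2' t) (at t within {0..T})"
    and cf1: "continuous_on {0..T} f1'"
    and cf2: "continuous_on {0..T} f2'"
    and U_ode: "\<And>t s. t \<in> {0..T} \<Longrightarrow> s \<in> {0..T} \<Longrightarrow>
        ((\<lambda>\<tau>. U \<tau> s) has_vector_derivative
           ((- \<i>) *\<^sub>M ((complex_of_real (f1 t) *\<^sub>M H1 + complex_of_real (f2 t) *\<^sub>M H2) ** U t s)))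
        (at t within {0..T})"
    and U_init: "\<And>s. s \<in> {0..T} \<Longrightarrow> U s s = mat 1"
    and T_nonneg: "0 \<le> T"
begin

definition Hc :: "real \<Rightarrow> 'n cm" where "Hc t = f1 t *\<^sub>R CM H1 + f2 t *\<^sub>R CM H2"
definition Uc :: "real \<Rightarrow> real \<Rightarrow> 'n cm" where "Uc t s = CM (U t s)"

lemma Hc_adj: "adj (Hc t) = Hc t"
  by (simp add: Hc_def adj_add adj_scaleR adj_herm herm1 herm2)

lemma Uc_ode:
  assumes "t \<in> {0..T}" "s \<in> {0..T}"
  shows "((\<lambda>\<tau>. Uc \<tau> s) has_vector_derivative cs (- \<i>) (Hc t * Uc t s)) (at t within {0..T})"
proof -
  have "((\<lambda>\<tau>. CM (U \<tau> s)) has_vector_derivative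
     CM ((- \<i>) *\<^sub>M ((complex_of_real (f1 t) *\<^sub>M H1 + complex_of_real (f2 t) *\<^sub>M H2) ** U t s))) (at t within {0..T})"
    by (rule bounded_linear.has_vector_derivative[OF bounded_linear_CM U_ode[OF assms]])
  also have "CM ((- \<i>) *\<^sub>M ((complex_of_real (f1 t) *\<^sub>M H1 + complex_of_real (f2 t) *\<^sub>M H2) ** U t s))
      = cs (- \<i>) (Hc t * Uc t s)"
    by (rule cm_eqI) (simp add: Hc_def Uc_def rep_cs rep_mult rep_add rep_scaleR CM_inverse csmult_real)
  finally show ?thesis unfolding Uc_def .
qed

lemma Uc_init: "s \<in> {0..T} \<Longrightarrow> Uc s s = 1"
  by (rule cm_eqI) (simp add: Uc_def U_init CM_inverse rep_one)

lemma Uc_unitary1: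
  assumes "t \<in> {0..T}" "s \<in> {0..T}"
  shows "adj (Uc t s) * Uc t s = 1"
proof -
  have "adj (Uc t s) * Uc t s = adj (Uc s s) * Uc s s"
    using assms by (intro conserve[where Hf=Hc and T=T]) (auto intro!: Uc_ode simp: Hc_adj)
  then show ?thesis by (simp add: Uc_init[OF assms(2)] adj_one)
qed

lemma Uc_unitary2:
  assumes "t \<in> {0..T}" "s \<in> {0..T}"
  shows "Uc t s * adj (Uc t s) = 1"
proof -
  have "rep (adj (Uc t s)) ** rep (Uc t s) = mat 1"
    using Uc_unitary1[OF assms] by (metis rep_mult rep_one)
  then have "rep (Uc t s) ** rep (adj (Uc t s)) = mat 1"
    using matrix_left_right_inverse by blast
  then show ?thesis by (metis rep_mult rep_one cm_eqI)
qed

lemma Uc_group: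
  assumes t: "t \<in> {0..T}" and s: "s \<in> {0..T}"
  shows "Uc t s * Uc s 0 = Uc t 0"
proof -
  have z: "0 \<in> {0..T}" using T_nonneg by simp
  define Y where "Y \<tau> = Uc \<tau> s * Uc s 0 - Uc \<tau> 0" for \<tau>
  have Yd: "(Y has_vector_derivative cs (- \<i>) (Hc \<tau> * Y \<tau>)) (at \<tau> within {0..T})" if "\<tau> \<in> {0..T}" for \<tau>
  proof -
    have "(Y has_vector_derivative (cs (- \<i>) (Hc \<tau> * Uc \<tau> s) * Uc s 0 - cs (- \<i>) (Hc \<tau> * Uc \<tau> 0))) (at \<tau> within {0..T})"
      unfolding Y_def
      by (intro has_vector_derivative_diff has_vector_derivative_mult_left Uc_ode that s z)
    also have "cs (- \<i>) (Hc \<tau> * Uc \<tau> s) * Uc s 0 - cs (- \<i>) (Hc \<tau> * Uc \<tau> 0) = cs (- \<i>) (Hc \<tau> * Y \<tau>)"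
      by (simp add: Y_def cs_mult_left cs_diff algebra_simps)
    finally show ?thesis .
  qed
  have "adj (Y t) * Y t = adj (Y s) * Y s"
    using t s by (intro conserve[where Hf=Hc and T=T]) (auto intro!: Yd simp: Hc_adj)
  also have "Y s = 0" by (simp add: Y_def Uc_init[OF s])
  finally have "adj (Y t) * Y t = 0" by (simp add: adj_zero)
  then have "Y t = 0" by (rule adj_Y_zero)
  then show ?thesis by (simp add: Y_def)
qed

lemma Uc_split:
  assumes "t \<in> {0..T}" "s \<in> {0..T}"
  shows "Uc t 0 * adj (Uc s 0) = Uc t s"
proof -
  have z: "0 \<in> {0..T}" using T_nonneg by simp
  have "Uc t 0 * adj (Uc s 0) = Uc t s * (Uc s 0 * adj (Uc s 0))"
    by (metis Uc_group[OF assms] mult.assoc)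
  also have "\<dots> = Uc t s" by (simp add: Uc_unitary2[OF assms(2) z])
  finally show ?thesis .
qed

lemma voc:
  assumes h: "0 \<le> h" "h \<le> T"
    and Vd: "\<And>s. s \<in> {0..h} \<Longrightarrow> (V has_vector_derivative V' s) (at s within {0..h})"
    and V0: "V 0 = 1"
  shows "((\<lambda>s. Uc h s * (V' s + cs \<i> (Hc s * V s))) has_integral (V h - Uc h 0)) {0..h}"
proof -
  have z: "0 \<in> {0..T}" using T_nonneg by simp
  have sub: "{0..h} \<subseteq> {0..T}" using h by auto
  define W where "W s = adj (Uc s 0) * V s" for s
  have Wd: "(W has_vector_derivative adj (Uc s 0) * (V' s + cs \<i> (Hc s * V s))) (at s within {0..h})"
    if s: "s \<in> {0..h}" for s
  proof -
    have sT: "s \<in> {0..T}" using s sub by auto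
    have "((\<lambda>s. Uc s 0) has_vector_derivative cs (- \<i>) (Hc s * Uc s 0)) (at s within {0..h})"
      by (rule has_vector_derivative_within_subset[OF Uc_ode[OF sT z] sub])
    then have "(W has_vector_derivative (adj (Uc s 0) * V' s + adj (cs (- \<i>) (Hc s * Uc s 0)) * V s)) (at s within {0..h})"
      unfolding W_def
      by (intro has_vector_derivative_mult bounded_linear.has_vector_derivative[OF bounded_linear_adj] Vd s)
    also have "adj (Uc s 0) * V' s + adj (cs (- \<i>) (Hc s * Uc s 0)) * V s = adj (Uc s 0) * (V' s + cs \<i> (Hc s * V s))"
      by (simp add: adj_cs adj_mult Hc_adj cs_mult_left cs_mult_right distrib_left mult.assoc)
    finally show ?thesis .
  qed
  have "((\<lambda>s. adj (Uc s 0) * (V' s + cs \<i> (Hc s * V s))) has_integral (W h - W 0)) {0..h}"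
    by (rule fundamental_theorem_of_calculus) (use h Wd in auto)
  then have "((\<lambda>s. Uc h 0 * (adj (Uc s 0) * (V' s + cs \<i> (Hc s * V s)))) has_integral (Uc h 0 * (W h - W 0))) {0..h}"
    by (rule has_integral_mult_right)
  moreover have "Uc h 0 * (W h - W 0) = V h - Uc h 0"
    using h by (simp add: W_def V0 Uc_init z adj_one right_diff_distrib mult.assoc[symmetric] Uc_unitary2)
  moreover have "Uc h 0 * (adj (Uc s 0) * (V' s + cs \<i> (Hc s * V s))) = Uc h s * (V' s + cs \<i> (Hc s * V s))"
    if "s \<in> {0..h}" for s
    using that h sub by (simp add: mult.assoc[symmetric] Uc_split)
  ultimately show ?thesis using has_integral_eq by (smt (verit, ccfv_threshold))
qed

end

context setting begin

lemma cont_f1: "continuous_on {0..T} f1" by (rule DERIV_continuous_on[OF df1])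
lemma cont_f2: "continuous_on {0..T} f2" by (rule DERIV_continuous_on[OF df2])

definition F1 :: "real \<Rightarrow> real" where "F1 x = integral {0..x} f1"
definition aa :: "real \<Rightarrow> real" where "aa x = F1 x - F1 (x/2)"
definition bb :: "real \<Rightarrow> real" where "bb x = integral {0..x} f2"
definition cc :: "real \<Rightarrow> real" where "cc x = F1 (x/2)"
definition aa' :: "real \<Rightarrow> real" where "aa' x = f1 x - f1 (x/2) / 2"
definition cc' :: "real \<Rightarrow> real" where "cc' x = f1 (x/2) / 2"
definition aa'' :: "real \<Rightarrow> real" where "aa'' x = f1' x - f1' (x/2) / 4"

lemma half_in: "x \<in> {0..T} \<Longrightarrow> x/2 \<in> {0..T}" by auto
lemma half_img: "(\<lambda>x. x/2) ` {0..T} \<subseteq> {0..T}" using T_nonneg by auto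

lemma half_chain:
  assumes x: "x \<in> {0..T}"
    and d: "\<And>y. y \<in> {0..T} \<Longrightarrow> (g has_real_derivative g' y) (at y within {0..T})"
  shows "((\<lambda>x. g (x/2)) has_real_derivative g' (x/2) / 2) (at x within {0..T})"
proof -
  have "(g has_real_derivative g' (x/2)) (at (x/2) within (\<lambda>x. x/2) ` {0..T})"
    by (rule has_field_derivative_subset[OF d[OF half_in[OF x]] half_img])
  moreover have "((\<lambda>x. x/2) has_real_derivative 1/2) (at x within {0..T})"
    by (auto intro!: derivative_eq_intros)
  ultimately have "(g \<circ> (\<lambda>x. x/2) has_real_derivative g' (x/2) * (1/2)) (at x within {0..T})"
    by (rule DERIV_image_chain)
  then show ?thesis by (simp add: o_def)
qed

lemma F1_deriv: "x \<in> {0..T} \<Longrightarrow> (F1 has_real_derivative f1 x) (at x within {0..T})"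
  unfolding F1_def has_real_derivative_iff_has_vector_derivative
  by (rule integral_has_vector_derivative[OF cont_f1])

lemma bb_deriv: "x \<in> {0..T} \<Longrightarrow> (bb has_real_derivative f2 x) (at x within {0..T})"
  unfolding bb_def has_real_derivative_iff_has_vector_derivative
  by (rule integral_has_vector_derivative[OF cont_f2])

lemma cc_deriv: "x \<in> {0..T} \<Longrightarrow> (cc has_real_derivative cc' x) (at x within {0..T})"
  unfolding cc_def cc'_def by (rule half_chain[OF _ F1_deriv])

lemma aa_deriv: "x \<in> {0..T} \<Longrightarrow> (aa has_real_derivative aa' x) (at x within {0..T})"
proof -
  assume x: "x \<in> {0..T}"
  have "((\<lambda>x. F1 x - F1 (x/2)) has_real_derivative f1 x - f1 (x/2) / 2) (at x within {0..T})"
    by (intro DERIV_diff F1_deriv x half_chain[OF x F1_deriv])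
  then show ?thesis by (simp add: aa_def[abs_def] aa'_def)
qed

lemma aa'_deriv: "x \<in> {0..T} \<Longrightarrow> (aa' has_real_derivative aa'' x) (at x within {0..T})"
proof -
  assume x: "x \<in> {0..T}"
  have "((\<lambda>x. f1 x - f1 (x/2) / 2) has_real_derivative f1' x - (f1' (x/2) / 2) / 2) (at x within {0..T})"
    by (intro DERIV_diff DERIV_cdivide df1 x half_chain[OF x df1])
  then show ?thesis by (simp add: aa'_def[abs_def] aa''_def)
qed

lemma aa_0: "aa 0 = 0" by (simp add: aa_def)
lemma bb_0: "bb 0 = 0" by (simp add: bb_def)
lemma cc_0: "cc 0 = 0" by (simp add: cc_def F1_def)

lemma aa_eq: "x \<in> {0..T} \<Longrightarrow> aa x = integral {x/2..x} f1"
proof -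
  assume x: "x \<in> {0..T}"
  have "f1 integrable_on {0..x}"
    by (rule integrable_continuous_interval[OF continuous_on_subset[OF cont_f1]]) (use x in auto)
  then have "integral {0..x/2} f1 + integral {x/2..x} f1 = integral {0..x} f1"
    using x by (intro Henstock_Kurzweil_Integration.integral_combine) auto
  then show ?thesis by (simp add: aa_def F1_def)
qed

lemma cc_eq: "cc x = integral {0..x/2} f1" by (simp add: cc_def F1_def)

definition H1c :: "'n cm" where "H1c = CM H1"
definition H2c :: "'n cm" where "H2c = CM H2"
definition K1 :: "'n cm" where "K1 = cs (- \<i>) H1c"
definition K2 :: "'n cm" where "K2 = cs (- \<i>) H2c"

definition V :: "real \<Rightarrow> 'n cm" where
  "V x = exp (aa x *\<^sub>R K1) * exp (bb x *\<^sub>R K2) * exp (cc x *\<^sub>R K1)"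
definition V' :: "real \<Rightarrow> 'n cm" where
  "V' x = exp (aa x *\<^sub>R K1) * exp (bb x *\<^sub>R K2) * (cc' x *\<^sub>R (K1 * exp (cc x *\<^sub>R K1)))
     + (exp (aa x *\<^sub>R K1) * (f2 x *\<^sub>R (K2 * exp (bb x *\<^sub>R K2))) + (aa' x *\<^sub>R (K1 * exp (aa x *\<^sub>R K1))) * exp (bb x *\<^sub>R K2)) * exp (cc x *\<^sub>R K1)"

lemma V_deriv: "x \<in> {0..T} \<Longrightarrow> (V has_vector_derivative V' x) (at x within {0..T})"
  unfolding V_def[abs_def] V'_def
  by (intro has_vector_derivative_mult exp_sR_deriv aa_deriv bb_deriv cc_deriv)

lemma V_0: "V 0 = 1" by (simp add: V_def aa_0 bb_0 cc_0)

lemma Hc_K: "Hc x = cs \<i> (f1 x *\<^sub>R K1 + f2 x *\<^sub>R K2)"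
  by (simp add: Hc_def K1_def K2_def H1c_def H2c_def cs_add cs_scaleR cs_cs cs_1)

lemma iHc: "cs \<i> (Hc x * Z) = - ((f1 x *\<^sub>R K1 + f2 x *\<^sub>R K2) * Z)"
  by (simp add: Hc_K cs_mult_left cs_cs cs_neg_scalar cs_1)

definition X :: "real \<Rightarrow> 'n cm" where
  "X x = cc' x *\<^sub>R (Ad (bb x) K2 K1 - K1) + f2 x *\<^sub>R (K2 - Ad (- aa x) K1 K2)"

lemma ring_alg:
  fixes A Ai B Bi C K1 K2 :: "'a::real_normed_algebra_1"
  assumes AAi: "A * Ai = 1" and BiB: "Bi * B = 1" and KA: "K1 * A = A * K1" and pq: "p + q = f"
  shows "A * B * (q *\<^sub>R (K1 * C)) + (A * (g *\<^sub>R (K2 * B)) + (p *\<^sub>R (K1 * A)) * B) * C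
      - (f *\<^sub>R K1 + g *\<^sub>R K2) * (A * B * C)
    = A * (q *\<^sub>R (B * K1 * Bi - K1) + g *\<^sub>R (K2 - Ai * K2 * A)) * B * C"
proof -
  have e1: "A * (Ai * Z) = Z" for Z by (metis AAi mult.assoc mult_1_left)
  have e2: "Bi * (B * Z) = Z" for Z by (metis BiB mult.assoc mult_1_left)
  have e3: "K1 * (A * Z) = A * (K1 * Z)" for Z by (metis KA mult.assoc)
  have f: "f = p + q" using pq by simp
  show ?thesis by (simp add: algebra_simps e1 e2 e3 f)
qed

lemma R_eq:
  assumes x: "x \<in> {0..T}"
  shows "V' x + cs \<i> (Hc x * V x) = exp (aa x *\<^sub>R K1) * X x * exp (bb x *\<^sub>R K2) * exp (cc x *\<^sub>R K1)"
proof -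
  have pq: "aa' x + cc' x = f1 x" by (simp add: aa'_def cc'_def)
  have "V' x + cs \<i> (Hc x * V x) = V' x - (f1 x *\<^sub>R K1 + f2 x *\<^sub>R K2) * V x" by (simp add: iHc)
  also have "\<dots> = exp (aa x *\<^sub>R K1) * (cc' x *\<^sub>R (exp (bb x *\<^sub>R K2) * K1 * exp ((- bb x) *\<^sub>R K2) - K1)
       + f2 x *\<^sub>R (K2 - exp ((- aa x) *\<^sub>R K1) * K2 * exp (aa x *\<^sub>R K1))) * exp (bb x *\<^sub>R K2) * exp (cc x *\<^sub>R K1)"
    unfolding V'_def V_def
    by (rule ring_alg[OF exp_sR_inv1 exp_sR_inv2 exp_sR_comm pq])
  also have "\<dots> = exp (aa x *\<^sub>R K1) * X x * exp (bb x *\<^sub>R K2) * exp (cc x *\<^sub>R K1)"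
    by (simp add: X_def Ad_def)
  finally show ?thesis .
qed

end

lemma taylor2:
  fixes G :: "real \<Rightarrow> 'a::banach"
  assumes x: "0 \<le> x"
    and d1: "\<And>u. u \<in> {0..x} \<Longrightarrow> (G has_vector_derivative G1 u) (at u within {0..x})"
    and d2: "\<And>u. u \<in> {0..x} \<Longrightarrow> (G1 has_vector_derivative G2 u) (at u within {0..x})"
  shows "((\<lambda>u. (x - u) *\<^sub>R G2 u) has_integral (G x - G 0 - x *\<^sub>R G1 0)) {0..x}"
proof -
  define F where "F u = (x - u) *\<^sub>R G1 u + G u" for u
  have "(F has_vector_derivative (x - u) *\<^sub>R G2 u) (at u within {0..x})" if u: "u \<in> {0..x}" for u
  proof -
    have "(F has_vector_derivative ((x - u) *\<^sub>R G2 u + (- 1) *\<^sub>R G1 u + G1 u)) (at u within {0..x})"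
      unfolding F_def[abs_def]
      by (intro has_vector_derivative_add has_vector_derivative_scaleR d1 d2 u derivative_eq_intros) auto
    then show ?thesis by simp
  qed
  then have "((\<lambda>u. (x - u) *\<^sub>R G2 u) has_integral (F x - F 0)) {0..x}"
    by (intro fundamental_theorem_of_calculus x)
  then show ?thesis by (simp add: F_def algebra_simps)
qed

context setting begin

lemma aa'_cont: "continuous_on {0..T} aa'"
proof -
  have "continuous_on {0..T} (\<lambda>x. f1 (x/2))"
    by (rule continuous_on_compose2[OF cont_f1]) (auto intro!: continuous_intros simp: T_nonneg)
  then show ?thesis unfolding aa'_def[abs_def] by (intro continuous_intros cont_f1) auto
qed

lemma aa''_cont: "continuous_on {0..T} aa''"
proof -
  have "continuous_on {0..T} (\<lambda>x. f1' (x/2))"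
    by (rule continuous_on_compose2[OF cf1]) (auto intro!: continuous_intros simp: T_nonneg)
  then show ?thesis unfolding aa''_def[abs_def] by (intro continuous_intros cf1) auto
qed

lemma aa_cont: "continuous_on {0..T} aa" by (rule DERIV_continuous_on[OF aa_deriv])
lemma bb_cont: "continuous_on {0..T} bb" by (rule DERIV_continuous_on[OF bb_deriv])

definition Cc :: "'n cm" where "Cc = H1c * H2c - H2c * H1c"
definition Cc11 :: "'n cm" where "Cc11 = H1c * Cc - Cc * H1c"
definition C21 :: "'n cm" where "C21 = H2c * H1c - H1c * H2c"
definition C221 :: "'n cm" where "C221 = H2c * C21 - C21 * H2c"

lemma K1K2: "K1 * K2 - K2 * K1 = - Cc"
  by (simp add: K1_def K2_def Cc_def cs_mult_left cs_mult_right cs_cs cs_diff[symmetric] cs_neg_scalar cs_1)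
lemma K2K1: "K2 * K1 - K1 * K2 = Cc"
proof -
  have "K2 * K1 - K1 * K2 = - (K1 * K2 - K2 * K1)" by simp
  then show ?thesis by (simp add: K1K2)
qed
lemma cs_swap: "cs (- c) (A - B) = cs c (B - A)"
  by (simp add: cs_neg_scalar cs_diff)
lemma K1Cm: "K1 * (- Cc) - (- Cc) * K1 = cs \<i> Cc11"
  by (simp add: K1_def Cc11_def cs_mult_left cs_mult_right cs_diff[symmetric] cs_uminus[symmetric] cs_neg_scalar[symmetric] algebra_simps cs_swap)
lemma K2Cc: "K2 * Cc - Cc * K2 = cs \<i> C221"
proof -
  have "C21 = - Cc" by (simp add: C21_def Cc_def)
  then show ?thesis
    by (simp add: K2_def C221_def cs_mult_left cs_mult_right cs_diff[symmetric] cs_uminus[symmetric] cs_neg_scalar[symmetric] algebra_simps cs_swap)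
qed


lemma P_int:
  assumes r: "continuous_on {0..T} r" and phi: "continuous_on {0..T} \<phi>" and x: "x \<in> {0..T}"
  shows "(\<lambda>u. (r u * (x - u)) *\<^sub>R Ad (\<phi> u) K N) integrable_on {0..x}"
proof -
  have sub: "{0..x} \<subseteq> {0..T}" using x by auto
  have "continuous_on {0..T} (\<lambda>u. (r u * (x - u)) *\<^sub>R Ad (\<phi> u) K N)"
    by (intro continuous_intros r Ad_cont phi)
  then show ?thesis by (intro integrable_continuous_interval continuous_on_subset[OF _ sub])
qed

lemma maa_cont: "continuous_on {0..T} (\<lambda>u. - aa u)" by (intro continuous_intros aa_cont)
lemma aa'sq_cont: "continuous_on {0..T} (\<lambda>u. (aa' u)\<^sup>2)" by (intro continuous_intros aa'_cont)
lemma f2sq_cont: "continuous_on {0..T} (\<lambda>u. (f2 u)\<^sup>2)" by (intro continuous_intros cont_f2)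

lemma int_split:
  fixes P Q :: "real \<Rightarrow> 'n cm"
  assumes "((\<lambda>u. P u + cs \<i> (Q u)) has_integral Y) S" "P integrable_on S" "Q integrable_on S"
  shows "integral S P + cs \<i> (integral S Q) = Y"
proof -
  have "((\<lambda>u. P u + cs \<i> (Q u)) has_integral (integral S P + cs \<i> (integral S Q))) S"
    using has_integral_add[OF integrable_integral[OF assms(2)] has_integral_linear[OF integrable_integral[OF assms(3)] bounded_linear_cs]]
    by (simp add: o_def)
  then show ?thesis using assms(1) has_integral_unique by blast
qed

lemma TG:
  assumes x: "x \<in> {0..T}"
  shows "integral {0..x} (\<lambda>u. (aa'' u * (x - u)) *\<^sub>R Ad (- aa u) K1 Cc)
       + cs \<i> (integral {0..x} (\<lambda>u. ((aa' u)\<^sup>2 * (x - u)) *\<^sub>R Ad (- aa u) K1 Cc11))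
       = Ad (- aa x) K1 K2 - K2 - (x * (f1 0 / 2)) *\<^sub>R Cc"
proof -
  have sub: "{0..x} \<subseteq> {0..T}" using x by auto
  define G1 where "G1 u = (- aa' u) *\<^sub>R Ad (- aa u) K1 (- Cc)" for u
  define G2 where "G2 u = (- aa' u) *\<^sub>R ((- aa' u) *\<^sub>R Ad (- aa u) K1 (K1 * (- Cc) - (- Cc) * K1))
     + (- aa'' u) *\<^sub>R Ad (- aa u) K1 (- Cc)" for u
  have d1: "((\<lambda>u. Ad (- aa u) K1 K2) has_vector_derivative G1 u) (at u within {0..x})" if u: "u \<in> {0..x}" for u
  proof -
    have uT: "u \<in> {0..T}" using u sub by auto
    have "((\<lambda>u. - aa u) has_real_derivative - aa' u) (at u within {0..x})"
      by (intro DERIV_minus has_field_derivative_subset[OF aa_deriv[OF uT] sub])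
    from Ad_deriv[OF this, of K1 K2] show ?thesis by (simp add: G1_def K1K2)
  qed
  have d2: "(G1 has_vector_derivative G2 u) (at u within {0..x})" if u: "u \<in> {0..x}" for u
  proof -
    have uT: "u \<in> {0..T}" using u sub by auto
    have m: "((\<lambda>u. - aa u) has_real_derivative - aa' u) (at u within {0..x})"
      by (intro DERIV_minus has_field_derivative_subset[OF aa_deriv[OF uT] sub])
    have m2: "((\<lambda>u. - aa' u) has_real_derivative - aa'' u) (at u within {0..x})"
      by (intro DERIV_minus has_field_derivative_subset[OF aa'_deriv[OF uT] sub])
    show ?thesis unfolding G1_def[abs_def] G2_def
      by (rule has_vector_derivative_scaleR[OF m2 Ad_deriv[OF m]])
  qed
  have T: "((\<lambda>u. (x - u) *\<^sub>R G2 u) has_integral (Ad (- aa x) K1 K2 - Ad (- aa 0) K1 K2 - x *\<^sub>R G1 0)) {0..x}"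
    by (rule taylor2[OF _ d1 d2]) (use x in auto)
  have eq: "(x - u) *\<^sub>R G2 u = (aa'' u * (x - u)) *\<^sub>R Ad (- aa u) K1 Cc + cs \<i> (((aa' u)\<^sup>2 * (x - u)) *\<^sub>R Ad (- aa u) K1 Cc11)" for u
    unfolding G2_def K1Cm by (simp add: Ad_cs Ad_minus Ad_scaleR cs_scaleR cs_diff cs_add power2_eq_square algebra_simps)
  have val: "Ad (- aa x) K1 K2 - Ad (- aa 0) K1 K2 - x *\<^sub>R G1 0 = Ad (- aa x) K1 K2 - K2 - (x * (f1 0 / 2)) *\<^sub>R Cc"
    by (simp add: G1_def aa_0 Ad_0 aa'_def)
  show ?thesis
    by (rule int_split[OF T[unfolded eq val]])
       (intro P_int aa''_cont aa'sq_cont maa_cont x)+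
qed

lemma TK:
  assumes x: "x \<in> {0..T}"
  shows "integral {0..x} (\<lambda>u. (f2' u * (x - u)) *\<^sub>R Ad (bb u) K2 Cc)
       + cs \<i> (integral {0..x} (\<lambda>u. ((f2 u)\<^sup>2 * (x - u)) *\<^sub>R Ad (bb u) K2 C221))
       = Ad (bb x) K2 K1 - K1 - (x * f2 0) *\<^sub>R Cc"
proof -
  have sub: "{0..x} \<subseteq> {0..T}" using x by auto
  define G1 where "G1 u = f2 u *\<^sub>R Ad (bb u) K2 Cc" for u
  define G2 where "G2 u = f2 u *\<^sub>R (f2 u *\<^sub>R Ad (bb u) K2 (K2 * Cc - Cc * K2))
     + f2' u *\<^sub>R Ad (bb u) K2 Cc" for u
  have d1: "((\<lambda>u. Ad (bb u) K2 K1) has_vector_derivative G1 u) (at u within {0..x})" if u: "u \<in> {0..x}" for u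
  proof -
    have uT: "u \<in> {0..T}" using u sub by auto
    have "(bb has_real_derivative f2 u) (at u within {0..x})"
      by (rule has_field_derivative_subset[OF bb_deriv[OF uT] sub])
    from Ad_deriv[OF this, of K2 K1] show ?thesis by (simp add: G1_def K2K1)
  qed
  have d2: "(G1 has_vector_derivative G2 u) (at u within {0..x})" if u: "u \<in> {0..x}" for u
  proof -
    have uT: "u \<in> {0..T}" using u sub by auto
    have m: "(bb has_real_derivative f2 u) (at u within {0..x})"
      by (rule has_field_derivative_subset[OF bb_deriv[OF uT] sub])
    have m2: "(f2 has_real_derivative f2' u) (at u within {0..x})"
      by (rule has_field_derivative_subset[OF df2[OF uT] sub])
    show ?thesis unfolding G1_def[abs_def] G2_def
      by (rule has_vector_derivative_scaleR[OF m2 Ad_deriv[OF m]])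
  qed
  have T: "((\<lambda>u. (x - u) *\<^sub>R G2 u) has_integral (Ad (bb x) K2 K1 - Ad (bb 0) K2 K1 - x *\<^sub>R G1 0)) {0..x}"
    by (rule taylor2[OF _ d1 d2]) (use x in auto)
  have eq: "(x - u) *\<^sub>R G2 u = (f2' u * (x - u)) *\<^sub>R Ad (bb u) K2 Cc + cs \<i> (((f2 u)\<^sup>2 * (x - u)) *\<^sub>R Ad (bb u) K2 C221)" for u
    unfolding G2_def K2Cc by (simp add: Ad_cs Ad_minus Ad_scaleR cs_scaleR cs_diff cs_add power2_eq_square algebra_simps)
  have val: "Ad (bb x) K2 K1 - Ad (bb 0) K2 K1 - x *\<^sub>R G1 0 = Ad (bb x) K2 K1 - K1 - (x * f2 0) *\<^sub>R Cc"
    by (simp add: G1_def bb_0 Ad_0)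
  show ?thesis
    by (rule int_split[OF T[unfolded eq val]])
       (intro P_int cf2 f2sq_cont bb_cont x)+
qed

end

lemma int_rep:
  fixes F :: "real \<Rightarrow> 'n::finite cm"
  assumes "F integrable_on S" "\<And>u. u \<in> S \<Longrightarrow> g u = rep (F u)"
  shows "integral S g = rep (integral S F)"
proof -
  have "integral S g = integral S (rep \<circ> F)" by (rule integral_cong) (simp add: assms(2))
  also have "\<dots> = rep (integral S F)" by (rule integral_linear[OF assms(1) bounded_linear_rep])
  finally show ?thesis .
qed

lemma exp_ad_rep: "exp_ad (rep Z) (rep N) = rep (exp Z * N * exp (- Z))"
  by (simp add: exp_ad_def mexp_rep rep_mult rep_uminus[symmetric])

lemma rep_csR: "c *\<^sub>M rep Z = rep (cs c Z)" by (simp add: rep_cs)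

context setting begin

lemma rK1: "rep K1 = (- \<i>) *\<^sub>M H1" by (simp add: K1_def rep_cs H1c_def CM_inverse)
lemma rK2: "rep K2 = (- \<i>) *\<^sub>M H2" by (simp add: K2_def rep_cs H2c_def CM_inverse)
lemma rCc: "rep Cc = commutator H1 H2"
  by (simp add: Cc_def commutator_def H1c_def H2c_def rep_diff rep_mult CM_inverse)
lemma rCc11: "rep Cc11 = commutator H1 (commutator H1 H2)"
  by (simp add: Cc11_def commutator_def H1c_def rep_diff rep_mult CM_inverse rCc[unfolded commutator_def])
lemma rC221: "rep C221 = commutator H2 (commutator H2 H1)"
  by (simp add: C221_def C21_def commutator_def H1c_def H2c_def rep_diff rep_mult CM_inverse)

lemma mexpA: "mexp ((- \<i> * complex_of_real a) *\<^sub>M H1) = rep (exp (a *\<^sub>R K1))"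
  unfolding csmult_mi rK1[symmetric] rep_scaleR[symmetric] mexp_rep by (rule refl)
lemma mexpB: "mexp ((- \<i> * complex_of_real a) *\<^sub>M H2) = rep (exp (a *\<^sub>R K2))"
  unfolding csmult_mi rK2[symmetric] rep_scaleR[symmetric] mexp_rep by (rule refl)

lemma exadA: "exp_ad ((\<i> * complex_of_real a) *\<^sub>M H1) (rep N) = rep (Ad (- a) K1 N)"
proof -
  have e1: "(\<i> * complex_of_real a) *\<^sub>M H1 = rep ((- a) *\<^sub>R K1)"
    unfolding csmult_pi rK1[symmetric] rep_scaleR[symmetric] by (rule refl)
  have e2: "- ((\<i> * complex_of_real a) *\<^sub>M H1) = rep (a *\<^sub>R K1)"
    unfolding csmult_pi rK1[symmetric] rep_scaleR[symmetric] rep_uminus[symmetric] by simp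
  show ?thesis unfolding exp_ad_def e2 by (simp add: e1 mexp_rep Ad_def rep_mult)
qed
lemma exadB: "exp_ad ((- \<i> * complex_of_real a) *\<^sub>M H2) (rep N) = rep (Ad a K2 N)"
proof -
  have e1: "(- \<i> * complex_of_real a) *\<^sub>M H2 = rep (a *\<^sub>R K2)"
    unfolding csmult_mi rK2[symmetric] rep_scaleR[symmetric] by (rule refl)
  have e2: "- ((- \<i> * complex_of_real a) *\<^sub>M H2) = rep ((- a) *\<^sub>R K2)"
    unfolding csmult_mi rK2[symmetric] rep_scaleR[symmetric] rep_uminus[symmetric] by simp
  show ?thesis by (subst e1, subst exp_ad_rep) (simp add: Ad_def)
qed

lemma int_f2': "x \<in> {0..T} \<Longrightarrow> integral {0..x} f2' = f2 x - f2 0"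
proof -
  assume x: "x \<in> {0..T}"
  have sub: "{0..x} \<subseteq> {0..T}" using x by auto
  have "(f2' has_integral (f2 x - f2 0)) {0..x}"
  proof (rule fundamental_theorem_of_calculus)
    show "0 \<le> x" using x by auto
    fix u assume "u \<in> {0..x}"
    then have "u \<in> {0..T}" using sub by auto
    then show "(f2 has_vector_derivative f2' u) (at u within {0..x})"
      using has_field_derivative_subset[OF df2 sub] has_real_derivative_iff_has_vector_derivative by blast
  qed
  then show ?thesis by (rule integral_unique)
qed

lemma int_f1'h: "x \<in> {0..T} \<Longrightarrow> integral {0..x} (\<lambda>s. f1' (s/2)) = 2 * (f1 (x/2) - f1 0)"
proof -
  assume x: "x \<in> {0..T}"
  have sub: "{0..x} \<subseteq> {0..T}" using x by auto
  have "((\<lambda>s. f1' (s/2)) has_integral (2 * f1 (x/2) - 2 * f1 (0/2))) {0..x}"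
  proof (rule fundamental_theorem_of_calculus)
    show "0 \<le> x" using x by auto
    fix u assume "u \<in> {0..x}"
    then have u: "u \<in> {0..T}" using sub by auto
    have "((\<lambda>s. 2 * f1 (s/2)) has_real_derivative 2 * (f1' (u/2) / 2)) (at u within {0..T})"
      by (intro DERIV_cmult half_chain[OF u df1])
    then show "((\<lambda>s. 2 * f1 (s/2)) has_vector_derivative f1' (u/2)) (at u within {0..x})"
      using has_field_derivative_subset[OF _ sub] has_real_derivative_iff_has_vector_derivative by fastforce
  qed
  then show ?thesis by (simp add: integral_unique right_diff_distrib)
qed

definition I3 :: "real \<Rightarrow> 'n cm" where "I3 x = integral {0..x} (\<lambda>u. (aa'' u * (x - u)) *\<^sub>R Ad (- aa u) K1 Cc)"
definition I5 :: "real \<Rightarrow> 'n cm" where "I5 x = integral {0..x} (\<lambda>u. ((aa' u)\<^sup>2 * (x - u)) *\<^sub>R Ad (- aa u) K1 Cc11)"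
definition I4 :: "real \<Rightarrow> 'n cm" where "I4 x = integral {0..x} (\<lambda>u. (f2' u * (x - u)) *\<^sub>R Ad (bb u) K2 Cc)"
definition I6 :: "real \<Rightarrow> 'n cm" where "I6 x = integral {0..x} (\<lambda>u. ((f2 u)\<^sup>2 * (x - u)) *\<^sub>R Ad (bb u) K2 C221)"

lemma Eg2_rep:
  assumes x: "x \<in> {0..T}"
  shows "Eg2 H1 H2 f1 f2 f1' f2' x = rep (
      (- (x/2) * f1 0 * (f2 x - f2 0)) *\<^sub>R Cc + ((x/4) * f2 0 * (2 * (f1 (x/2) - f1 0))) *\<^sub>R Cc
      - f2 x *\<^sub>R I3 x + (f1 (x/2) / 2) *\<^sub>R I4 x
      - cs (\<i> * complex_of_real (f2 x)) (I5 x) + cs (\<i> / 2 * complex_of_real (f1 (x/2))) (I6 x))"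
proof -
  have sub: "{0..x} \<subseteq> {0..T}" using x by auto
  have i3: "integral {0..x} (\<lambda>s. complex_of_real ((f1' s - f1' (s/2) / 4) * (x - s)) *\<^sub>M
        exp_ad ((\<i> * complex_of_real (integral {s/2..s} f1)) *\<^sub>M H1) (commutator H1 H2)) = rep (I3 x)"
    unfolding I3_def
  proof (rule int_rep)
    show "(\<lambda>u. (aa'' u * (x - u)) *\<^sub>R Ad (- aa u) K1 Cc) integrable_on {0..x}"
      by (intro P_int aa''_cont maa_cont x)
    fix u assume "u \<in> {0..x}"
    then have u: "u \<in> {0..T}" using sub by auto
    show "complex_of_real ((f1' u - f1' (u/2) / 4) * (x - u)) *\<^sub>M
        exp_ad ((\<i> * complex_of_real (integral {u/2..u} f1)) *\<^sub>M H1) (commutator H1 H2)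
      = rep ((aa'' u * (x - u)) *\<^sub>R Ad (- aa u) K1 Cc)"
      unfolding aa_eq[OF u, symmetric] rCc[symmetric] exadA csmult_real by (simp add: rep_scaleR aa''_def)
  qed
  have i5: "integral {0..x} (\<lambda>s. complex_of_real ((f1 s - f1 (s/2) / 2)\<^sup>2 * (x - s)) *\<^sub>M
        exp_ad ((\<i> * complex_of_real (integral {s/2..s} f1)) *\<^sub>M H1) (commutator H1 (commutator H1 H2))) = rep (I5 x)"
    unfolding I5_def
  proof (rule int_rep)
    show "(\<lambda>u. ((aa' u)\<^sup>2 * (x - u)) *\<^sub>R Ad (- aa u) K1 Cc11) integrable_on {0..x}"
      by (intro P_int aa'sq_cont maa_cont x)
    fix u assume "u \<in> {0..x}"
    then have u: "u \<in> {0..T}" using sub by auto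
    show "complex_of_real ((f1 u - f1 (u/2) / 2)\<^sup>2 * (x - u)) *\<^sub>M
        exp_ad ((\<i> * complex_of_real (integral {u/2..u} f1)) *\<^sub>M H1) (commutator H1 (commutator H1 H2))
      = rep (((aa' u)\<^sup>2 * (x - u)) *\<^sub>R Ad (- aa u) K1 Cc11)"
      unfolding aa_eq[OF u, symmetric] rCc11[symmetric] exadA csmult_real by (simp add: rep_scaleR aa'_def)
  qed
  have i4: "integral {0..x} (\<lambda>s. complex_of_real (f2' s * (x - s)) *\<^sub>M
        exp_ad ((- \<i> * complex_of_real (integral {0..s} f2)) *\<^sub>M H2) (commutator H1 H2)) = rep (I4 x)"
    unfolding I4_def
  proof (rule int_rep)
    show "(\<lambda>u. (f2' u * (x - u)) *\<^sub>R Ad (bb u) K2 Cc) integrable_on {0..x}"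
      by (intro P_int cf2 bb_cont x)
    fix u assume "u \<in> {0..x}"
    show "complex_of_real (f2' u * (x - u)) *\<^sub>M
        exp_ad ((- \<i> * complex_of_real (integral {0..u} f2)) *\<^sub>M H2) (commutator H1 H2)
      = rep ((f2' u * (x - u)) *\<^sub>R Ad (bb u) K2 Cc)"
      unfolding bb_def[symmetric] rCc[symmetric] exadB csmult_real by (simp add: rep_scaleR)
  qed
  have i6: "integral {0..x} (\<lambda>s. complex_of_real ((f2 s)\<^sup>2 * (x - s)) *\<^sub>M
        exp_ad ((- \<i> * complex_of_real (integral {0..s} f2)) *\<^sub>M H2) (commutator H2 (commutator H2 H1))) = rep (I6 x)"
    unfolding I6_def
  proof (rule int_rep)
    show "(\<lambda>u. ((f2 u)\<^sup>2 * (x - u)) *\<^sub>R Ad (bb u) K2 C221) integrable_on {0..x}"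
      by (intro P_int f2sq_cont bb_cont x)
    fix u assume "u \<in> {0..x}"
    show "complex_of_real ((f2 u)\<^sup>2 * (x - u)) *\<^sub>M
        exp_ad ((- \<i> * complex_of_real (integral {0..u} f2)) *\<^sub>M H2) (commutator H2 (commutator H2 H1))
      = rep (((f2 u)\<^sup>2 * (x - u)) *\<^sub>R Ad (bb u) K2 C221)"
      unfolding bb_def[symmetric] rC221[symmetric] exadB csmult_real by (simp add: rep_scaleR)
  qed
  show ?thesis
    unfolding Eg2_def
    unfolding i3 i4 i5 i6
    unfolding int_f2'[OF x] int_f1'h[OF x] rCc[symmetric] csmult_real
    unfolding rep_csR rep_scaleR[symmetric] rep_add[symmetric] rep_diff[symmetric]
    by (rule refl)
qed

end

lemma cs_ir: "cs (\<i> * complex_of_real r) Z = r *\<^sub>R cs \<i> Z"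
  by (metis cs_cs cs_of_real cs_scaleR mult.commute)
lemma cs_ir2: "cs (\<i> / 2 * complex_of_real r) Z = (r / 2) *\<^sub>R cs \<i> Z"
proof -
  have "\<i> / 2 * complex_of_real r = complex_of_real (r/2) * \<i>" by simp
  then show ?thesis by (metis cs_cs cs_of_real)
qed

context setting begin

lemma E_eq:
  assumes x: "x \<in> {0..T}"
  shows "CM (Eg2 H1 H2 f1 f2 f1' f2' x) = X x"
proof -
  have tg: "Ad (- aa x) K1 K2 = K2 + I3 x + cs \<i> (I5 x) + (x * (f1 0 / 2)) *\<^sub>R Cc"
    using TG[OF x] unfolding I3_def I5_def by (simp add: algebra_simps)
  have tk: "Ad (bb x) K2 K1 = K1 + I4 x + cs \<i> (I6 x) + (x * f2 0) *\<^sub>R Cc"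
    using TK[OF x] unfolding I4_def I6_def by (simp add: algebra_simps)
  have coef: "- (x/2) * f1 0 * (f2 x - f2 0) + (x/4) * f2 0 * (2 * (f1 (x/2) - f1 0))
      = cc' x * (x * f2 0) - f2 x * (x * (f1 0 / 2))"
    by (simp add: cc'_def field_simps)
  have "CM (Eg2 H1 H2 f1 f2 f1' f2' x) =
      (- (x/2) * f1 0 * (f2 x - f2 0)) *\<^sub>R Cc + ((x/4) * f2 0 * (2 * (f1 (x/2) - f1 0))) *\<^sub>R Cc
      - f2 x *\<^sub>R I3 x + (f1 (x/2) / 2) *\<^sub>R I4 x
      - cs (\<i> * complex_of_real (f2 x)) (I5 x) + cs (\<i> / 2 * complex_of_real (f1 (x/2))) (I6 x)"
    unfolding Eg2_rep[OF x] by (rule rep_inverse)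
  also have "\<dots> = (- (x/2) * f1 0 * (f2 x - f2 0) + (x/4) * f2 0 * (2 * (f1 (x/2) - f1 0))) *\<^sub>R Cc
      - f2 x *\<^sub>R I3 x + (f1 (x/2) / 2) *\<^sub>R I4 x
      - f2 x *\<^sub>R cs \<i> (I5 x) + (f1 (x/2) / 2) *\<^sub>R cs \<i> (I6 x)"
    unfolding cs_ir cs_ir2 by (simp add: scaleR_left_distrib scaleR_left_diff_distrib)
  also have "\<dots> = X x"
    unfolding coef X_def tg tk by (simp add: cc'_def algebra_simps)
  finally show ?thesis .
qed

end

theorem lemma6:
  fixes H1 H2 :: "complex^'n^'n"
    and f1 f2 f1' f2' :: "real \<Rightarrow> real"
    and T h :: real
    and U :: "real \<Rightarrow> real \<Rightarrow> complex^'n^'n"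
  assumes herm1: "hermitian H1" and herm2: "hermitian H2"
    and df1: "\<And>t. t \<in> {0..T} \<Longrightarrow> (f1 has_real_derivative f1' t) (at t within {0..T})"
    and df2: "\<And>t. t \<in> {0..T} \<Longrightarrow> (f2 has_real_derivative f2' t) (at t within {0..T})"
    and cf1: "continuous_on {0..T} f1'"
    and cf2: "continuous_on {0..T} f2'"
    and U_ode: "\<And>t s. t \<in> {0..T} \<Longrightarrow> s \<in> {0..T} \<Longrightarrow>
        ((\<lambda>\<tau>. U \<tau> s) has_vector_derivative
           ((- \<i>) *\<^sub>M ((complex_of_real (f1 t) *\<^sub>M H1 + complex_of_real (f2 t) *\<^sub>M H2) ** U t s)))
        (at t within {0..T})"
    and U_init: "\<And>s. s \<in> {0..T} \<Longrightarrow> U s s = mat 1"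
    and h: "0 < h" "h \<le> T"
  shows "Ug2 H1 H2 f1 f2 h - U h 0 =
    integral {0..h} (\<lambda>s. U h s
       ** mexp ((- \<i> * complex_of_real (integral {s/2..s} f1)) *\<^sub>M H1)
       ** Eg2 H1 H2 f1 f2 f1' f2' s
       ** mexp ((- \<i> * complex_of_real (integral {0..s} f2)) *\<^sub>M H2)
       ** mexp ((- \<i> * complex_of_real (integral {0..s/2} f1)) *\<^sub>M H1))"
proof -
  interpret S: setting H1 H2 f1 f2 f1' f2' T U
    using assms by unfold_locales auto
  have sub: "{0..h} \<subseteq> {0..T}" using h by auto
  have hT: "h \<in> {0..T}" using h by auto
  have I: "((\<lambda>s. S.Uc h s * (S.V' s + cs \<i> (S.Hc s * S.V s))) has_integral (S.V h - S.Uc h 0)) {0..h}"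
  proof (rule S.voc)
    show "0 \<le> h" "h \<le> T" using h by auto
    show "S.V 0 = 1" by (rule S.V_0)
    fix s assume "s \<in> {0..h}"
    then have "s \<in> {0..T}" using sub by auto
    then show "(S.V has_vector_derivative S.V' s) (at s within {0..h})"
      using has_vector_derivative_within_subset[OF S.V_deriv sub] by blast
  qed
  have I2: "((\<lambda>s. rep (S.Uc h s * (S.V' s + cs \<i> (S.Hc s * S.V s)))) has_integral rep (S.V h - S.Uc h 0)) {0..h}"
    using has_integral_linear[OF I bounded_linear_rep] by (simp add: o_def)
  have pt: "U h s
       ** mexp ((- \<i> * complex_of_real (integral {s/2..s} f1)) *\<^sub>M H1)
       ** Eg2 H1 H2 f1 f2 f1' f2' s
       ** mexp ((- \<i> * complex_of_real (integral {0..s} f2)) *\<^sub>M H2)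
       ** mexp ((- \<i> * complex_of_real (integral {0..s/2} f1)) *\<^sub>M H1)
     = rep (S.Uc h s * (S.V' s + cs \<i> (S.Hc s * S.V s)))" if s: "s \<in> {0..h}" for s
  proof -
    have sT: "s \<in> {0..T}" using s sub by auto
    have "S.V' s + cs \<i> (S.Hc s * S.V s) = exp (S.aa s *\<^sub>R S.K1) * CM (Eg2 H1 H2 f1 f2 f1' f2' s)
        * exp (S.bb s *\<^sub>R S.K2) * exp (S.cc s *\<^sub>R S.K1)"
      unfolding S.R_eq[OF sT] S.E_eq[OF sT] ..
    then have "rep (S.Uc h s * (S.V' s + cs \<i> (S.Hc s * S.V s))) =
       rep (S.Uc h s) ** rep (exp (S.aa s *\<^sub>R S.K1)) ** rep (CM (Eg2 H1 H2 f1 f2 f1' f2' s))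
        ** rep (exp (S.bb s *\<^sub>R S.K2)) ** rep (exp (S.cc s *\<^sub>R S.K1))"
      by (simp only: mult.assoc[symmetric] rep_mult)
    also have "\<dots> = U h s
       ** mexp ((- \<i> * complex_of_real (integral {s/2..s} f1)) *\<^sub>M H1)
       ** Eg2 H1 H2 f1 f2 f1' f2' s
       ** mexp ((- \<i> * complex_of_real (integral {0..s} f2)) *\<^sub>M H2)
       ** mexp ((- \<i> * complex_of_real (integral {0..s/2} f1)) *\<^sub>M H1)"
      unfolding S.aa_eq[OF sT, symmetric] S.bb_def[symmetric] S.cc_eq[symmetric] S.mexpA S.mexpB
      by (simp add: S.Uc_def CM_inverse)
    finally show ?thesis by simp
  qed
  have "integral {0..h} (\<lambda>s. U h s
       ** mexp ((- \<i> * complex_of_real (integral {s/2..s} f1)) *\<^sub>M H1)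
       ** Eg2 H1 H2 f1 f2 f1' f2' s
       ** mexp ((- \<i> * complex_of_real (integral {0..s} f2)) *\<^sub>M H2)
       ** mexp ((- \<i> * complex_of_real (integral {0..s/2} f1)) *\<^sub>M H1)) = rep (S.V h - S.Uc h 0)"
  proof (rule integral_unique)
    show "((\<lambda>s. U h s
       ** mexp ((- \<i> * complex_of_real (integral {s/2..s} f1)) *\<^sub>M H1)
       ** Eg2 H1 H2 f1 f2 f1' f2' s
       ** mexp ((- \<i> * complex_of_real (integral {0..s} f2)) *\<^sub>M H2)
       ** mexp ((- \<i> * complex_of_real (integral {0..s/2} f1)) *\<^sub>M H1)) has_integral rep (S.V h - S.Uc h 0)) {0..h}"
      by (rule has_integral_eq[OF _ I2]) (simp only: pt)
  qed
  also have "rep (S.V h - S.Uc h 0) = Ug2 H1 H2 f1 f2 h - U h 0"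
    unfolding Ug2_def S.aa_eq[OF hT, symmetric] S.bb_def[symmetric] S.cc_eq[symmetric] S.mexpA S.mexpB
    by (simp add: S.V_def S.Uc_def CM_inverse rep_diff rep_mult)
  finally show ?thesis by simp
qed

end
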